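(* Let $h$ be an oriented cohomology theory with associated formal group law $F$, let $X$ be a smooth projective variety and let $L_1,\dots,L_r$ be line bundles on $X$. Then, in $h(X)$, $$c_r\Big(\prod_{l=1}^r(1-[L_l^\vee])\Big)\equiv(-1)^{r-1}(r-1)!\cdot\prod_{l=1}^rc_1(L_l)\mod\gamma^{r+1}h(X),$$ where the product on the left is taken in $K_0(X)$.
   Context: An oriented cohomology theory (in the sense of Levine–Morel / Panin–Smirnov) $h$ is a contravariant functor from smooth projective varieties over a field $k$ to commutative rings, with push-forwards for proper maps, equipped with characteristic classes $c_i:K_0(X)\to h(X)$, $i\ge1$. The total characteristic class is $c(x)=1+c_1(x)t+c_2(x)t^2+\dots\in h(X)[[t]]$; it satisfies $c(E)=1$ for a trivial bundle $E$, $c_i(E)=0$ for $i>\mathrm{rk}(E)$, and $c(E\oplus E')=c(E)c(E')$ (so $c$ is multiplicative on $K_0$). There is a formal group law $F$ over $R=h(\mathrm{Spec}\,k)$ with $c_1(L_1\otimes L_2)=c_1(L_1)+_Fc_1(L_2)$ for line bundles $L_1,L_2$. For $d\ge0$, $\gamma^dh(X)$ is the $R$-submodule of $h(X)$ generated by all products $c_1(L_1)\cdots c_1(L_l)$ with $l\ge d$ and $L_1,\dots,L_l$ line bundles on $X$. *)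

theory Defs
  imports Main
begin

text \<open>Abstract rendering of the data of an oriented cohomology theory h evaluated
on one fixed smooth projective variety X:
  'k = K_0(X), 'h = h(X), 'r = R = h(Spec k), phi : R \<rightarrow> h(X) the structure map,
  P \<subseteq> K_0(X) the set of classes of line bundles, dual L = [L^dual],
  c x i = c_i(x) (with c_0 = 1), a i j = coefficients of the formal group law F.\<close>

definition ring_hom_fun :: "('r::comm_ring_1 \<Rightarrow> 'h::comm_ring_1) \<Rightarrow> bool" where
  "ring_hom_fun phi \<longleftrightarrow> phi 0 = 0 \<and> phi 1 = 1 \<and>
     (\<forall>x y. phi (x + y) = phi x + phi y) \<and> (\<forall>x y. phi (x * y) = phi x * phi y)"

text \<open>Coefficients of a (commutative) formal group law
  F(x,y) = \<Sum> a i j x^i y^j with F(x,0) = x, F(0,y) = y.\<close>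
definition fgl_coeffs :: "(nat \<Rightarrow> nat \<Rightarrow> 'r::comm_ring_1) \<Rightarrow> bool" where
  "fgl_coeffs a \<longleftrightarrow> a 1 0 = 1 \<and> a 0 1 = 1 \<and>
     (\<forall>i. i \<noteq> 1 \<longrightarrow> a i 0 = 0) \<and> (\<forall>j. j \<noteq> 1 \<longrightarrow> a 0 j = 0) \<and>
     (\<forall>i j. a i j = a j i)"

definition line_bundle_classes :: "'k::comm_ring_1 set \<Rightarrow> ('k \<Rightarrow> 'k) \<Rightarrow> bool" where
  "line_bundle_classes P dual \<longleftrightarrow> 1 \<in> P \<and> (\<forall>L\<in>P. \<forall>M\<in>P. L * M \<in> P) \<and>
     (\<forall>L\<in>P. dual L \<in> P \<and> L * dual L = 1)"

definition char_classes :: "'k::comm_ring_1 set \<Rightarrow> ('k \<Rightarrow> nat \<Rightarrow> 'h::comm_ring_1) \<Rightarrow> bool" where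
  "char_classes P c \<longleftrightarrow> (\<forall>x. c x 0 = 1) \<and>
     (\<forall>x y n. c (x + y) n = (\<Sum>i\<le>n. c x i * c y (n - i))) \<and>
     (\<forall>n\<ge>1. c 1 n = 0) \<and>
     (\<forall>L\<in>P. \<forall>n\<ge>2. c L n = 0)"

text \<open>c_1 of line bundles is nilpotent in h(X) (X smooth projective), so F can be evaluated
  on first Chern classes; and c_1(L \<otimes> M) = F(c_1 L, c_1 M).\<close>
definition fgl_compatible ::
  "('r::comm_ring_1 \<Rightarrow> 'h::comm_ring_1) \<Rightarrow> (nat \<Rightarrow> nat \<Rightarrow> 'r) \<Rightarrow> 'k::comm_ring_1 set \<Rightarrow>
   ('k \<Rightarrow> nat \<Rightarrow> 'h) \<Rightarrow> bool" where
  "fgl_compatible phi a P c \<longleftrightarrow> (\<forall>L\<in>P. \<exists>N. c L 1 ^ N = 0) \<and>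
     (\<forall>L\<in>P. \<forall>M\<in>P. \<forall>N. c L 1 ^ N = 0 \<and> c M 1 ^ N = 0 \<longrightarrow>
        c (L * M) 1 = (\<Sum>i<N. \<Sum>j<N. phi (a i j) * c L 1 ^ i * c M 1 ^ j))"

definition oriented_data ::
  "('r::comm_ring_1 \<Rightarrow> 'h::comm_ring_1) \<Rightarrow> (nat \<Rightarrow> nat \<Rightarrow> 'r) \<Rightarrow> 'k::comm_ring_1 set \<Rightarrow>
   ('k \<Rightarrow> 'k) \<Rightarrow> ('k \<Rightarrow> nat \<Rightarrow> 'h) \<Rightarrow> bool" where
  "oriented_data phi a P dual c \<longleftrightarrow> ring_hom_fun phi \<and> fgl_coeffs a \<and>
     line_bundle_classes P dual \<and> char_classes P c \<and> fgl_compatible phi a P c"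

text \<open>gamma^d h(X): the R-submodule of h(X) generated by products
  c_1(L_1) \<cdots> c_1(L_l), l \<ge> d, L_i line bundles (R acting through phi).\<close>
inductive_set gamma_filt ::
  "('r::comm_ring_1 \<Rightarrow> 'h::comm_ring_1) \<Rightarrow> 'k::comm_ring_1 set \<Rightarrow> ('k \<Rightarrow> nat \<Rightarrow> 'h) \<Rightarrow> nat \<Rightarrow> 'h set"
  for phi P c d where
  zero: "0 \<in> gamma_filt phi P c d"
| add: "x \<in> gamma_filt phi P c d \<Longrightarrow> y \<in> gamma_filt phi P c d \<Longrightarrow> x + y \<in> gamma_filt phi P c d"
| gen: "set Ls \<subseteq> P \<Longrightarrow> length Ls \<ge> d \<Longrightarrow>
          phi s * prod_list (map (\<lambda>L. c L 1) Ls) \<in> gamma_filt phi P c d"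

end

theory Submission
  imports Defs "HOL-Computational_Algebra.Formal_Power_Series"
begin

unbundle fps_syntax



lemma product_composition_lemma':
  assumes c0: "c $ 0 = (0::'a::comm_ring_1)"
    and d0: "d $ 0 = 0"
  shows "((a oo c) * (b oo d)) $ n =
    sum (\<lambda>(k,m). a $ k * b $ m * (c^k * d^m) $ n) {(k,m). k + m \<le> n}"  (is "?l = ?r")
proof -
  let ?S = "{(k::nat, m::nat). k + m \<le> n}"
  have s: "?S \<subseteq> {0..n} \<times> {0..n}" by (simp add: subset_eq)
  have f: "finite {(k::nat, m::nat). k + m \<le> n}"
    by (auto intro: finite_subset[OF s])
  have "?r = (\<Sum>(k, m) \<in> {(k, m). k + m \<le> n}. \<Sum>j = 0..n. a $ k * b $ m * (c ^ k $ j * d ^ m $ (n - j)))"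
    by (simp add: fps_mult_nth sum_distrib_left)
  also have "\<dots> = (\<Sum>i = 0..n. \<Sum>(k,m)\<in>{(k,m). k+m \<le> n}. a $ k * c ^ k $ i * b $ m * d ^ m $ (n-i))"
    unfolding sum.swap [where A = "{0..n}"] by (auto simp add: field_simps intro: sum.cong)
  also have "... = (\<Sum>i = 0..n.
                    \<Sum>q = 0..i. \<Sum>j = 0..n - i. a $ q * c ^ q $ i * (b $ j * d ^ j $ (n - i)))"
    apply (rule sum.cong [OF refl])
    apply (simp add: sum.cartesian_product mult.assoc)
    apply (rule sum.mono_neutral_right[OF f], force)
    by clarsimp (metis c0 d0 leI startsby_zero_power_prefix mult_zero_left mult_zero_right)
  also have "\<dots> = ?l"
    by (simp add: fps_mult_nth fps_compose_nth sum_product)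
  finally show ?thesis by simp
qed

lemma fps_compose_mult_distrib':
  assumes c0: "c $ 0 = (0::'a::comm_ring_1)"
  shows "(a * b) oo c = (a oo c) * (b oo c)"
proof -
  have l: "((a oo c) * (b oo c)) $ n = sum (\<lambda>s. sum (\<lambda>i. a $ i * b $ (s - i) * (c^s) $ n) {0..s}) {0..n}" for n
  unfolding product_composition_lemma'[OF c0 c0] power_add[symmetric]
  unfolding sum_pair_less_iff[where a = "\<lambda>k. a $ k" and b="\<lambda>m. b $ m" and c="\<lambda>s. (c ^ s) $ n" and n = n] ..
  show ?thesis
  proof (clarsimp simp add: fps_eq_iff l)
  show "(a * b oo c) $ n = (\<Sum>s = 0..n. \<Sum>i = 0..s. a $ i * b $ (s - i) * c ^ s $ n)" for n
    by (simp add: fps_compose_nth fps_mult_nth sum_distrib_right)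
  qed
qed

definition gX :: "'a::comm_ring_1 \<Rightarrow> 'a fps" where
  "gX z = Abs_fps (\<lambda>n. if n = 0 then 0 else (-z)^(n-1))"
definition Iz :: "'a::comm_ring_1 \<Rightarrow> 'a fps" where
  "Iz z = Abs_fps (\<lambda>n. (-z)^n)"
definition lin :: "'a::comm_ring_1 \<Rightarrow> 'a fps" where
  "lin z = 1 + fps_const z * fps_X"

lemma lin_nth: "lin z $ n = (if n = 0 then 1 else if n = 1 then z else 0)"
  by (simp add: lin_def)

lemma lin_Iz: "lin z * Iz z = 1"
proof (rule fps_ext)
  fix n
  show "(lin z * Iz z) $ n = 1 $ n"
  proof (cases n)
    case 0 then show ?thesis by (simp add: lin_def Iz_def)
  next
    case (Suc m)
    have "(lin z * Iz z) $ n = Iz z $ n + z * Iz z $ m"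
      by (simp add: lin_def Suc algebra_simps)
    also have "\<dots> = 0" by (simp add: Iz_def Suc)
    finally show ?thesis using Suc by simp
  qed
qed

lemma gX_lin: "gX z * lin z = fps_X"
proof (rule fps_ext)
  fix n
  show "(gX z * lin z) $ n = fps_X $ n"
  proof (cases n)
    case 0 then show ?thesis by (simp add: lin_def gX_def)
  next
    case (Suc m)
    have "(gX z * lin z) $ n = gX z $ n + z * gX z $ m"
      by (simp add: lin_def Suc algebra_simps)
    also have "\<dots> = fps_X $ n" by (cases m) (simp_all add: gX_def Suc)
    finally show ?thesis .
  qed
qed

lemma gX_0[simp]: "gX z $ 0 = 0" by (simp add: gX_def)

lemma lin_compose: "lin w oo gX z = 1 + fps_const w * gX z"
  by (simp add: lin_def fps_compose_add_distrib fps_compose_mult_distrib' fps_X_fps_compose_startby0)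

lemma lin_shift: "lin z * (lin w oo gX z) = lin (w + z)"
proof -
  have "lin z * (lin w oo gX z) = lin z + fps_const w * (gX z * lin z)"
    by (simp add: lin_compose algebra_simps)
  also have "\<dots> = lin z + fps_const w * fps_X" by (simp only: gX_lin)
  also have "\<dots> = lin (w + z)" by (simp add: lin_def fps_const_add[symmetric] algebra_simps del: fps_const_add)
  finally show ?thesis .
qed

lemma Iz_shift: "Iz (w + z) = Iz z * (Iz w oo gX z)"
proof -
  have a: "(Iz w oo gX z) * (lin w oo gX z) = 1"
  proof -
    have "(Iz w oo gX z) * (lin w oo gX z) = (Iz w * lin w) oo gX z"
      by (simp add: fps_compose_mult_distrib')
    also have "\<dots> = 1" using lin_Iz[of w] by (simp add: mult.commute)
    finally show ?thesis .
  qed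
  have b: "Iz z * (Iz w oo gX z) * lin (w+z) = 1"
  proof -
    have "Iz z * (Iz w oo gX z) * lin (w+z) = Iz z * (Iz w oo gX z) * (lin z * (lin w oo gX z))"
      by (simp add: lin_shift)
    also have "\<dots> = (lin z * Iz z) * ((Iz w oo gX z) * (lin w oo gX z))"
      by (simp add: algebra_simps)
    also have "\<dots> = 1" by (simp add: a lin_Iz)
    finally show ?thesis .
  qed
  have "Iz (w+z) = Iz (w+z) * (Iz z * (Iz w oo gX z) * lin (w+z))" using b by simp
  also have "\<dots> = (Iz (w+z) * lin (w+z)) * (Iz z * (Iz w oo gX z))"
    by (simp only: ac_simps)
  also have "\<dots> = Iz z * (Iz w oo gX z)" using lin_Iz[of "w+z"]
    by (simp add: mult.commute)
  finally show ?thesis .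
qed


lemma sum_one:
  assumes "finite A" "a \<in> A" "\<forall>i\<in>A. i \<noteq> a \<longrightarrow> f i = 0"
  shows "sum f A = f a"
proof -
  have "sum f {a} = sum f A"
    by (rule sum.mono_neutral_left) (use assms in auto)
  then show ?thesis by simp
qed

lemma sum_two:
  assumes "finite A" "a \<in> A" "b \<in> A" "a \<noteq> b" "\<forall>i\<in>A. i \<noteq> a \<longrightarrow> i \<noteq> b \<longrightarrow> f i = 0"
  shows "sum f A = f a + f b"
proof -
  have "sum f {a,b} = sum f A"
    by (rule sum.mono_neutral_left) (use assms in auto)
  then show ?thesis using assms by simp
qed

lemma gX_1[simp]: "gX y $ 1 = 1" by (simp add: gX_def)
lemma gX_Suc0[simp]: "gX y $ Suc 0 = 1" by (simp add: gX_def)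
lemma gX_2[simp]: "gX y $ 2 = - y" by (simp add: gX_def)
lemma gX_SS[simp]: "gX y $ Suc (Suc 0) = - y" by (simp add: gX_def)

lemma pw_diag: "gX y ^ n $ n = 1"
  using startsby_zero_power_nth_same[of "gX y" n] by simp

lemma pw_low: "k < n \<Longrightarrow> gX y ^ n $ k = 0"
  using startsby_zero_power_prefix[of "gX y" n] by simp

lemma pw_next: "gX y ^ n $ Suc n = - (of_nat n * y)"
proof (induction n)
  case 0 then show ?case by simp
next
  case (Suc n)
  have "gX y ^ Suc n $ Suc (Suc n) = (gX y ^ n * gX y) $ Suc (Suc n)"
    by (simp only: power_Suc2)
  also have "\<dots> = (\<Sum>i=0..Suc (Suc n). gX y ^ n $ i * gX y $ (Suc (Suc n) - i))"
    by (simp add: fps_mult_nth)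
  also have "\<dots> = gX y ^ n $ n * gX y $ (Suc (Suc n) - n) + gX y ^ n $ Suc n * gX y $ (Suc (Suc n) - Suc n)"
  proof (rule sum_two)
    show "\<forall>i\<in>{0..Suc (Suc n)}. i \<noteq> n \<longrightarrow> i \<noteq> Suc n \<longrightarrow> gX y ^ n $ i * gX y $ (Suc (Suc n) - i) = 0"
    proof (intro ballI impI)
      fix i assume "i \<in> {0..Suc (Suc n)}" "i \<noteq> n" "i \<noteq> Suc n"
      then have "i < n \<or> i = Suc (Suc n)" by auto
      then show "gX y ^ n $ i * gX y $ (Suc (Suc n) - i) = 0"
        by (auto simp: pw_low)
    qed
  qed auto
  also have "\<dots> = - (of_nat (Suc n) * y)"
    by (simp add: pw_diag Suc.IH numeral_2_eq_2 algebra_simps)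
  finally show ?case .
qed

lemma compose_low:
  assumes "\<forall>k. 0 < k \<and> k < r \<longrightarrow> h $ k = 0" "k \<le> r"
  shows "(h oo gX y) $ k = h $ k"
proof (cases "k = 0")
  case True then show ?thesis by simp
next
  case False
  have "(h oo gX y) $ k = (\<Sum>i=0..k. h $ i * (gX y ^ i $ k))" by (simp add: fps_compose_nth)
  also have "\<dots> = h $ k * (gX y ^ k $ k)"
  proof (rule sum_one)
    show "\<forall>i\<in>{0..k}. i \<noteq> k \<longrightarrow> h $ i * gX y ^ i $ k = 0"
    proof (intro ballI impI)
      fix i assume i: "i \<in> {0..k}" "i \<noteq> k"
      show "h $ i * gX y ^ i $ k = 0"
      proof (cases "i = 0")
        case True then show ?thesis using False by simp
      next
        case False then show ?thesis using i assms by auto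
      qed
    qed
  qed auto
  finally show ?thesis by (simp add: pw_diag)
qed

lemma compose_next:
  assumes "\<forall>k. 0 < k \<and> k < r \<longrightarrow> h $ k = 0" "r \<ge> 1"
  shows "(h oo gX y) $ Suc r = h $ Suc r - of_nat r * y * h $ r"
proof -
  have "(h oo gX y) $ Suc r = (\<Sum>i=0..Suc r. h $ i * (gX y ^ i $ Suc r))" by (simp add: fps_compose_nth)
  also have "\<dots> = h $ r * (gX y ^ r $ Suc r) + h $ Suc r * (gX y ^ Suc r $ Suc r)"
  proof (rule sum_two)
    show "\<forall>i\<in>{0..Suc r}. i \<noteq> r \<longrightarrow> i \<noteq> Suc r \<longrightarrow> h $ i * gX y ^ i $ Suc r = 0"
    proof (intro ballI impI)
      fix i assume i: "i \<in> {0..Suc r}" "i \<noteq> r" "i \<noteq> Suc r"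
      show "h $ i * gX y ^ i $ Suc r = 0"
      proof (cases "i = 0")
        case True then show ?thesis by simp
      next
        case False then show ?thesis using i assms by auto
      qed
    qed
  qed (use assms in auto)
  finally show ?thesis using pw_diag[of y "Suc r"] pw_next[of y r] by (simp del: power_Suc add: algebra_simps)
qed

lemma GL:
  fixes f h :: "'a::comm_ring_1 fps"
  assumes fh: "f * h = 1" and f0: "f $ 0 = 1"
    and fz: "\<forall>k. 0 < k \<and> k < r \<longrightarrow> f $ k = 0"
    and hz: "\<forall>k. 0 < k \<and> k < r \<longrightarrow> h $ k = 0"
    and hr: "h $ r = - a" and r1: "r \<ge> 1"
  shows "(f * (h oo gX y)) $ 0 = 1"
    "\<forall>k. 0 < k \<and> k < Suc r \<longrightarrow> (f * (h oo gX y)) $ k = 0"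
    "(f * (h oo gX y)) $ Suc r = of_nat r * y * a"
proof -
  define D where "D = (h oo gX y) - h"
  have Dlow: "D $ k = 0" if "k \<le> r" for k
    using compose_low[OF hz that] by (simp add: D_def)
  have Dnext: "D $ Suc r = of_nat r * y * a"
    using compose_next[OF hz r1, of y] hr by (simp add: D_def)
  have eq: "f * (h oo gX y) = 1 + f * D" by (simp add: D_def fh algebra_simps)
  have fDlow: "(f * D) $ k = 0" if "k \<le> r" for k
    unfolding fps_mult_nth by (rule sum.neutral) (use that Dlow in auto)
  have fDnext: "(f * D) $ Suc r = of_nat r * y * a"
  proof -
    have "(f * D) $ Suc r = (\<Sum>i=0..Suc r. f $ i * D $ (Suc r - i))" by (simp add: fps_mult_nth)
    also have "\<dots> = f $ 0 * D $ (Suc r - 0)"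
      by (rule sum_one) (auto simp: Dlow)
    finally show ?thesis by (simp add: f0 Dnext)
  qed
  show "(f * (h oo gX y)) $ 0 = 1" using fDlow[of 0] by (simp add: eq)
  show "\<forall>k. 0 < k \<and> k < Suc r \<longrightarrow> (f * (h oo gX y)) $ k = 0"
    using fDlow by (simp add: eq)
  show "(f * (h oo gX y)) $ Suc r = of_nat r * y * a" using fDnext by (simp add: eq)
qed


primrec mdl :: "(nat \<Rightarrow> 'a::comm_ring_1) \<Rightarrow> nat \<Rightarrow> 'a \<Rightarrow> 'a fps \<times> 'a fps" where
  "mdl x 0 = (\<lambda>z. (lin z, Iz z))"
| "mdl x (Suc r) = (\<lambda>z. (fst (mdl x r z) * snd (mdl x r (z + x (Suc r))),
                          snd (mdl x r z) * fst (mdl x r (z + x (Suc r)))))"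

lemma mdl_inv: "fst (mdl x r z) * snd (mdl x r z) = 1"
proof (induction r arbitrary: z)
  case 0 then show ?case by (simp add: lin_Iz)
next
  case (Suc r)
  have "fst (mdl x (Suc r) z) * snd (mdl x (Suc r) z) =
    (fst (mdl x r z) * snd (mdl x r z)) * (fst (mdl x r (z + x (Suc r))) * snd (mdl x r (z + x (Suc r))))"
    by (simp add: ac_simps)
  then show ?case using Suc.IH by simp
qed

lemma mdl_shift:
  "fst (mdl x r (w + z)) = (if r = 0 then lin z else 1) * (fst (mdl x r w) oo gX z) \<and>
   snd (mdl x r (w + z)) = (if r = 0 then Iz z else 1) * (snd (mdl x r w) oo gX z)"
proof (induction r arbitrary: w)
  case 0 then show ?case by (simp add: lin_shift Iz_shift)
next
  case (Suc r)
  let ?U = "(if r = 0 then lin z else 1)" and ?V = "(if r = 0 then Iz z else 1)"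
  have UV: "?U * ?V = 1" by (simp add: lin_Iz)
  have e: "w + z + x (Suc r) = (w + x (Suc r)) + z" by (simp add: ac_simps)
  have A: "fst (mdl x (Suc r) (w + z)) = (?U * ?V) * ((fst (mdl x r w) oo gX z) * (snd (mdl x r (w + x (Suc r))) oo gX z))"
    using Suc.IH[of w] Suc.IH[of "w + x (Suc r)"] by (simp add: e ac_simps)
  have B: "snd (mdl x (Suc r) (w + z)) = (?U * ?V) * ((snd (mdl x r w) oo gX z) * (fst (mdl x r (w + x (Suc r))) oo gX z))"
    using Suc.IH[of w] Suc.IH[of "w + x (Suc r)"] by (simp add: e ac_simps)
  show ?case using A B UV by (simp add: fps_compose_mult_distrib')
qed

lemma mdl_coeffs:
  assumes "r \<ge> 1"
  shows "fst (mdl x r 0) $ 0 = 1 \<and> (\<forall>k. 0 < k \<and> k < r \<longrightarrow> fst (mdl x r 0) $ k = 0) \<and>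
         fst (mdl x r 0) $ r = - (of_nat (fact (r - 1)) * (\<Prod>l=1..r. x l)) \<and>
         snd (mdl x r 0) $ 0 = 1 \<and> (\<forall>k. 0 < k \<and> k < r \<longrightarrow> snd (mdl x r 0) $ k = 0) \<and>
         snd (mdl x r 0) $ r = (of_nat (fact (r - 1)) * (\<Prod>l=1..r. x l))"
  using assms
proof (induction r rule: dec_induct)
  case base
  have l0: "lin (0::'a) = 1" by (simp add: lin_def)
  show ?case by (auto simp: l0 Iz_def lin_def)
next
  case (step r)
  let ?f = "fst (mdl x r 0)" and ?h = "snd (mdl x r 0)"
  let ?a = "of_nat (fact (r - 1)) * (\<Prod>l=1..r. x l) :: 'a"
  have r0: "r \<noteq> 0" using step.hyps by simp
  have sh1: "snd (mdl x r (0 + x (Suc r))) = ?h oo gX (x (Suc r))"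
    using mdl_shift[of x r 0 "x (Suc r)"] r0 by simp
  have sh2: "fst (mdl x r (0 + x (Suc r))) = ?f oo gX (x (Suc r))"
    using mdl_shift[of x r 0 "x (Suc r)"] r0 by simp
  have F: "fst (mdl x (Suc r) 0) = ?f * (?h oo gX (x (Suc r)))" using sh1 by simp
  have H: "snd (mdl x (Suc r) 0) = ?h * (?f oo gX (x (Suc r)))" using sh2 by simp
  have IH: "?f $ 0 = 1" "\<forall>k. 0 < k \<and> k < r \<longrightarrow> ?f $ k = 0" "?f $ r = - ?a"
     "?h $ 0 = 1" "\<forall>k. 0 < k \<and> k < r \<longrightarrow> ?h $ k = 0" "?h $ r = ?a"
    using step.IH by auto
  have inv1: "?f * ?h = 1" by (rule mdl_inv)
  have inv2: "?h * ?f = 1" using inv1 by (simp add: mult.commute)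
  have hr: "?h $ r = - (- ?a)" using IH(6) by simp
  note G1 = GL[OF inv1 IH(1) IH(2) IH(5) hr step.hyps(1), of "x (Suc r)"]
  note G2 = GL[OF inv2 IH(4) IH(5) IH(2) IH(3) step.hyps(1), of "x (Suc r)"]
  have fa: "fact r = r * fact (r - 1)" using fact_reduce[of r, where 'a=nat] r0 by simp
  have pr: "(\<Prod>l=1..Suc r. x l) = (\<Prod>l=1..r. x l) * x (Suc r)" by simp
  have new: "of_nat (fact (Suc r - 1)) * (\<Prod>l=1..Suc r. x l) = of_nat r * x (Suc r) * ?a"
    by (simp add: fa pr algebra_simps)
  show ?case
    unfolding F H using G1 G2 new by simp
qed



locale od_ctx =
  fixes phi :: "'r::comm_ring_1 \<Rightarrow> 'h::comm_ring_1"
    and a :: "nat \<Rightarrow> nat \<Rightarrow> 'r"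
    and P :: "'k::comm_ring_1 set"
    and dual :: "'k \<Rightarrow> 'k"
    and c :: "'k \<Rightarrow> nat \<Rightarrow> 'h"
  assumes od: "oriented_data phi a P dual c"
begin

abbreviation G where "G d \<equiv> gamma_filt phi P c d"

lemma hom: "phi 0 = 0" "phi 1 = 1" "phi (x + y) = phi x + phi y" "phi (x * y) = phi x * phi y"
  using od by (auto simp: oriented_data_def ring_hom_fun_def)

lemma phi_m1: "phi (-1) = -1"
proof -
  have "phi (-1) + phi 1 = 0" using hom(1) hom(3)[of "-1" 1] by simp
  then show ?thesis using hom(2) by (simp add: eq_neg_iff_add_eq_0)
qed

lemma fgl: "a 1 0 = 1" "a 0 1 = 1" "i \<noteq> 1 \<Longrightarrow> a i 0 = 0" "j \<noteq> 1 \<Longrightarrow> a 0 j = 0"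
  using od by (auto simp: oriented_data_def fgl_coeffs_def)

lemma lbc: "1 \<in> P" "L \<in> P \<Longrightarrow> M \<in> P \<Longrightarrow> L * M \<in> P" "L \<in> P \<Longrightarrow> dual L \<in> P"
  "L \<in> P \<Longrightarrow> L * dual L = 1"
  using od by (auto simp: oriented_data_def line_bundle_classes_def)

lemma cc: "c x 0 = 1" "c (x + y) n = (\<Sum>i\<le>n. c x i * c y (n - i))" "n \<ge> 1 \<Longrightarrow> c 1 n = 0"
  "L \<in> P \<Longrightarrow> n \<ge> 2 \<Longrightarrow> c L n = 0"
  using od by (auto simp: oriented_data_def char_classes_def)

lemma fc1: "L \<in> P \<Longrightarrow> \<exists>N. c L 1 ^ N = 0"
  using od unfolding oriented_data_def fgl_compatible_def by (elim conjE) (erule bspec)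

lemma fc2:
  assumes "L \<in> P" "M \<in> P" "c L 1 ^ N = 0" "c M 1 ^ N = 0"
  shows "c (L * M) 1 = (\<Sum>i<N. \<Sum>j<N. phi (a i j) * c L 1 ^ i * c M 1 ^ j)"
proof -
  have "fgl_compatible phi a P c" using od by (simp add: oriented_data_def)
  then have H: "\<forall>L\<in>P. \<forall>M\<in>P. \<forall>N. c L 1 ^ N = 0 \<and> c M 1 ^ N = 0 \<longrightarrow>
        c (L * M) 1 = (\<Sum>i<N. \<Sum>j<N. phi (a i j) * c L 1 ^ i * c M 1 ^ j)"
    unfolding fgl_compatible_def by (rule conjunct2)
  show ?thesis by (rule H[rule_format, OF assms(1,2)]) (rule conjI[OF assms(3,4)])
qed

subsection \<open>Filtration\<close>

lemma G_scale: "x \<in> G d \<Longrightarrow> phi s * x \<in> G d"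
proof (induction x rule: gamma_filt.induct)
  case zero then show ?case by (simp add: gamma_filt.zero)
next
  case (add x y) then show ?case by (simp add: distrib_left gamma_filt.add)
next
  case (gen Ls s')
  have "phi s * (phi s' * prod_list (map (\<lambda>L. c L 1) Ls)) = phi (s * s') * prod_list (map (\<lambda>L. c L 1) Ls)"
    by (simp add: hom mult.assoc)
  then show ?case using gamma_filt.gen[OF gen(1,2), where s="s * s'"] by simp
qed

lemma G_neg: "x \<in> G d \<Longrightarrow> - x \<in> G d"
  using G_scale[of x d "-1"] by (simp add: phi_m1)

lemma G_diff: assumes "x \<in> G d" "y \<in> G d" shows "x - y \<in> G d"
proof -
  have "x + - y \<in> G d" by (rule gamma_filt.add[OF assms(1) G_neg[OF assms(2)]])
  then show ?thesis by simp
qed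

lemma G_mono: "x \<in> G d' \<Longrightarrow> d \<le> d' \<Longrightarrow> x \<in> G d"
proof (induction x rule: gamma_filt.induct)
  case zero then show ?case by (simp add: gamma_filt.zero)
next
  case (add x y) then show ?case by (simp add: gamma_filt.add)
next
  case (gen Ls s) then show ?case by (intro gamma_filt.gen) auto
qed

lemma G_mult: "x \<in> G d \<Longrightarrow> y \<in> G e \<Longrightarrow> x * y \<in> G (d + e)"
proof (induction x rule: gamma_filt.induct)
  case zero then show ?case by (simp add: gamma_filt.zero)
next
  case (add x x') then show ?case by (simp add: distrib_right gamma_filt.add)
next
  case (gen Ls s)
  from gen.prems show ?case
  proof (induction y rule: gamma_filt.induct)
    case zero then show ?case by (simp add: gamma_filt.zero)
  next
    case (add y y') then show ?case by (simp add: distrib_left gamma_filt.add)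
  next
    case (gen Ms s')
    have "phi s * prod_list (map (\<lambda>L. c L 1) Ls) * (phi s' * prod_list (map (\<lambda>L. c L 1) Ms))
        = phi (s * s') * prod_list (map (\<lambda>L. c L 1) (Ls @ Ms))"
      by (simp add: hom ac_simps)
    then show ?case using gen gamma_filt.gen[of "Ls @ Ms" P "d + e" phi "s * s'" c] \<open>set Ls \<subseteq> P\<close>
      \<open>d \<le> length Ls\<close> by simp
  qed
qed

lemma G_one: "1 \<in> G 0"
  using gamma_filt.gen[of "[]" P 0 phi 1 c] by (simp add: hom)

lemma G_c1: "L \<in> P \<Longrightarrow> c L 1 \<in> G 1"
  using gamma_filt.gen[of "[L]" P 1 phi 1 c] by (simp add: hom)

lemma G_pow: "u \<in> G 1 \<Longrightarrow> u ^ n \<in> G n"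
proof (induction n)
  case 0 then show ?case by (simp add: G_one)
next
  case (Suc n)
  then have "u * u ^ n \<in> G (1 + n)" by (intro G_mult) auto
  then show ?case by simp
qed

lemma G_sum: "finite S \<Longrightarrow> (\<And>i. i \<in> S \<Longrightarrow> f i \<in> G d) \<Longrightarrow> sum f S \<in> G d"
  by (induction S rule: finite_induct) (auto simp: gamma_filt.zero gamma_filt.add)

lemma G_pow_diff: "u \<in> G 1 \<Longrightarrow> v \<in> G 1 \<Longrightarrow> u - v \<in> G 2 \<Longrightarrow> u ^ n - v ^ n \<in> G (Suc n)"
proof (induction n)
  case 0 then show ?case by (simp add: gamma_filt.zero)
next
  case (Suc n)
  have e: "u ^ Suc n - v ^ Suc n = u * (u ^ n - v ^ n) + (u - v) * v ^ n" by (simp add: algebra_simps)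
  have "u * (u ^ n - v ^ n) \<in> G (1 + Suc n)" using Suc by (intro G_mult) auto
  moreover have "(u - v) * v ^ n \<in> G (2 + n)" using Suc by (intro G_mult G_pow) auto
  ultimately show ?case unfolding e by (intro gamma_filt.add) auto
qed

definition good :: "'h fps \<Rightarrow> 'h fps \<Rightarrow> bool" where
  "good A B \<longleftrightarrow> (\<forall>n. A $ n \<in> G n \<and> B $ n \<in> G n \<and> A $ n - B $ n \<in> G (Suc n))"

lemma good_mult: assumes "good A B" "good A' B'" shows "good (A * A') (B * B')"
  unfolding good_def
proof (intro allI conjI)
  fix n
  have m: "X $ i * Y $ (n - i) \<in> G n" if "good X B1" "good Y B2" "i \<le> n" for X Y B1 B2 i
  proof -
    have "X $ i * Y $ (n - i) \<in> G (i + (n - i))" using that by (intro G_mult) (auto simp: good_def)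
    then show ?thesis using that by simp
  qed
  have m2: "X $ i * Y $ (n - i) \<in> G n" if "good B1 X" "good B2 Y" "i \<le> n" for X Y B1 B2 i
  proof -
    have "X $ i * Y $ (n - i) \<in> G (i + (n - i))" using that by (intro G_mult) (auto simp: good_def)
    then show ?thesis using that by simp
  qed
  show "(A * A') $ n \<in> G n"
    unfolding fps_mult_nth by (rule G_sum) (auto intro: m[OF assms(1) assms(2)])
  show "(B * B') $ n \<in> G n"
    unfolding fps_mult_nth by (rule G_sum) (auto intro: m2[OF assms(1) assms(2)])
  have E: "(A * A') $ n - (B * B') $ n = (\<Sum>i=0..n. (A $ i - B $ i) * A' $ (n - i) + B $ i * (A' $ (n - i) - B' $ (n - i)))"
    unfolding fps_mult_nth sum_subtractf[symmetric] by (rule sum.cong) (simp_all add: algebra_simps)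
  have S: "(\<Sum>i=0..n. (A $ i - B $ i) * A' $ (n - i) + B $ i * (A' $ (n - i) - B' $ (n - i))) \<in> G (Suc n)"
  proof (rule G_sum)
    fix i assume i: "i \<in> {0..n}"
    have e1: "Suc i + (n - i) = Suc n" and e2: "i + Suc (n - i) = Suc n" using i by auto
    have "(A $ i - B $ i) * A' $ (n - i) \<in> G (Suc i + (n - i))"
      using assms by (intro G_mult) (auto simp: good_def)
    then have t1: "(A $ i - B $ i) * A' $ (n - i) \<in> G (Suc n)" by (simp only: e1)
    have "B $ i * (A' $ (n - i) - B' $ (n - i)) \<in> G (i + Suc (n - i))"
      using assms by (intro G_mult) (auto simp: good_def)
    then have t2: "B $ i * (A' $ (n - i) - B' $ (n - i)) \<in> G (Suc n)" by (simp only: e2)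
    show "(A $ i - B $ i) * A' $ (n - i) + B $ i * (A' $ (n - i) - B' $ (n - i)) \<in> G (Suc n)"
      by (rule gamma_filt.add[OF t1 t2])
  qed simp
  show "(A * A') $ n - (B * B') $ n \<in> G (Suc n)" unfolding E by (rule S)
qed

lemma good_lin: assumes "u \<in> G 1" "v \<in> G 1" "u - v \<in> G 2" shows "good (lin u) (lin v)"
  unfolding good_def
proof (intro allI)
  fix n :: nat
  have d: "u - v \<in> G (Suc 1)" using assms(3) by (simp add: numeral_2_eq_2)
  consider "n = 0" | "n = 1" | "n \<ge> 2" by linarith
  then show "lin u $ n \<in> G n \<and> lin v $ n \<in> G n \<and> lin u $ n - lin v $ n \<in> G (Suc n)"
  proof cases
    case 1 then show ?thesis by (simp add: lin_nth G_one gamma_filt.zero)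
  next
    case 2 then show ?thesis using assms(1,2) d by (simp add: lin_nth)
  next
    case 3 then show ?thesis by (simp add: lin_nth gamma_filt.zero)
  qed
qed

lemma good_Iz: assumes "u \<in> G 1" "v \<in> G 1" "u - v \<in> G 2" shows "good (Iz u) (Iz v)"
proof -
  have d: "- u - - v \<in> G 2" using G_neg[OF assms(3)] by simp
  show ?thesis unfolding good_def Iz_def fps_nth_Abs_fps
    using G_pow[OF G_neg[OF assms(1)]] G_pow[OF G_neg[OF assms(2)]]
      G_pow_diff[OF G_neg[OF assms(1)] G_neg[OF assms(2)] d] by blast
qed


subsection \<open>Total characteristic class as power series\<close>

definition C :: "'k \<Rightarrow> 'h fps" where "C x = Abs_fps (c x)"

lemma C_add: "C (x + y) = C x * C y"
  by (rule fps_ext) (simp add: C_def fps_mult_nth cc(2) atLeast0AtMost)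

lemma C_zero: "C 0 = 1"
proof -
  let ?f = "fps_left_inverse (C 0) 1"
  have i: "?f * C 0 = 1" by (rule fps_left_inverse) (simp add: C_def cc(1))
  have e: "C 0 * C 0 = C 0" using C_add[of 0 0] by simp
  have "C 0 = ?f * C 0 * C 0" using i by simp
  also have "\<dots> = ?f * C 0" using e by (simp add: mult.assoc)
  finally show ?thesis using i by simp
qed

lemma C_line: assumes "M \<in> P" shows "C M = lin (c M 1)"
proof (rule fps_ext)
  fix n
  show "C M $ n = lin (c M 1) $ n"
  proof (cases "n \<ge> 2")
    case True then show ?thesis using cc(4)[OF assms True] by (simp add: C_def lin_nth)
  next
    case False then have "n = 0 \<or> n = 1" by auto
    then show ?thesis by (auto simp: C_def lin_nth cc(1))
  qed
qed

lemma C_negline: assumes "M \<in> P" shows "C (- M) = Iz (c M 1)"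
proof -
  have i: "C (- M) * lin (c M 1) = 1"
    using C_add[of "- M" M] C_zero C_line[OF assms] by simp
  have "C (- M) = C (- M) * (lin (c M 1) * Iz (c M 1))" by (simp add: lin_Iz)
  also have "\<dots> = Iz (c M 1)" by (simp only: mult.assoc[symmetric] i) simp
  finally show ?thesis .
qed

lemma fgl_lin: assumes "M \<in> P" "N \<in> P" shows "c (M * N) 1 - c M 1 - c N 1 \<in> G 2"
proof -
  let ?u = "c M 1" and ?v = "c N 1"
  obtain N1 where N1: "?u ^ N1 = 0" using fc1[OF assms(1)] by blast
  obtain N2 where N2: "?v ^ N2 = 0" using fc1[OF assms(2)] by blast
  define NN where "NN = N1 + N2 + 2"
  have uN: "?u ^ NN = 0" unfolding NN_def power_add using N1 by simp
  have vN: "?v ^ NN = 0" unfolding NN_def power_add using N2 by simp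
  have NN2: "NN \<ge> 2" by (simp add: NN_def)
  define T where "T i j = phi (a i j) * ?u ^ i * ?v ^ j" for i j
  define R where "R i j = (if 2 \<le> i + j then T i j else 0)" for i j
  have gu: "?u \<in> G 1" by (rule G_c1[OF assms(1)])
  have gv: "?v \<in> G 1" by (rule G_c1[OF assms(2)])
  have split: "T i j = R i j + (if i = 1 then (if j = 0 then ?u else 0) else 0)
                  + (if i = 0 then (if j = 1 then ?v else 0) else 0)" for i j
  proof (cases "2 \<le> i + j")
    case True then show ?thesis by (auto simp: R_def)
  next
    case False
    then consider "i = 0 \<and> j = 0" | "i = 1 \<and> j = 0" | "i = 0 \<and> j = 1" by linarith
    then show ?thesis
      using fgl(1,2) by cases (auto simp: R_def T_def fgl hom)
  qed
  have in1: "(\<Sum>j<NN. (if i = 1 then (if j = 0 then ?u else 0) else 0)) = (if i = 1 then ?u else 0)" for i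
  proof (cases "i = 1")
    case True then show ?thesis using NN2 by (simp add: sum.delta)
  qed simp
  have in2: "(\<Sum>j<NN. (if i = 0 then (if j = 1 then ?v else 0) else 0)) = (if i = 0 then ?v else 0)" for i
  proof (cases "i = 0")
    case True then show ?thesis using NN2 by (simp add: sum.delta)
  qed simp
  have s1: "(\<Sum>i<NN. \<Sum>j<NN. (if i = 1 then (if j = 0 then ?u else 0) else 0)) = ?u"
    unfolding in1 using NN2 by (simp add: sum.delta)
  have s2: "(\<Sum>i<NN. \<Sum>j<NN. (if i = 0 then (if j = 1 then ?v else 0) else 0)) = ?v"
    unfolding in2 using NN2 by (simp add: sum.delta)
  have "c (M * N) 1 = (\<Sum>i<NN. \<Sum>j<NN. T i j)"
    unfolding T_def by (rule fc2[OF assms uN vN])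
  also have "\<dots> = (\<Sum>i<NN. \<Sum>j<NN. R i j)
       + (\<Sum>i<NN. \<Sum>j<NN. (if i = 1 then (if j = 0 then ?u else 0) else 0))
       + (\<Sum>i<NN. \<Sum>j<NN. (if i = 0 then (if j = 1 then ?v else 0) else 0))"
    by (simp only: split sum.distrib)
  finally have e: "c (M * N) 1 - ?u - ?v = (\<Sum>i<NN. \<Sum>j<NN. R i j)"
    using s1 s2 by simp
  have "(\<Sum>i<NN. \<Sum>j<NN. R i j) \<in> G 2"
  proof (intro G_sum)
    fix i j
    show "R i j \<in> G 2"
    proof (cases "2 \<le> i + j")
      case True
      have "?u ^ i * ?v ^ j \<in> G (i + j)" by (intro G_mult G_pow gu gv)
      then have "phi (a i j) * (?u ^ i * ?v ^ j) \<in> G (i + j)" by (rule G_scale)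
      then have "T i j \<in> G 2" using True by (auto simp: T_def mult.assoc intro: G_mono)
      then show ?thesis using True by (simp add: R_def)
    next
      case False then show ?thesis by (simp add: R_def gamma_filt.zero)
    qed
  qed simp_all
  then show ?thesis using e by simp
qed

lemma dual_lin: assumes "L \<in> P" shows "c L 1 + c (dual L) 1 \<in> G 2"
proof -
  have "c (L * dual L) 1 - c L 1 - c (dual L) 1 \<in> G 2" by (rule fgl_lin[OF assms lbc(3)[OF assms]])
  then have h: "- (c L 1 + c (dual L) 1) \<in> G 2" using lbc(4)[OF assms] cc(3)[of 1] by simp
  show ?thesis using G_neg[OF h] by (simp add: add.commute)
qed

definition KK :: "(nat \<Rightarrow> 'k) \<Rightarrow> nat \<Rightarrow> 'k" where
  "KK L r = (\<Prod>l=1..r. (1 - dual (L l)))"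

lemma main_claim:
  assumes LP: "\<forall>l. 1 \<le> l \<and> l \<le> RR \<longrightarrow> L l \<in> P"
  shows "r \<le> RR \<Longrightarrow> M \<in> P \<Longrightarrow> z \<in> G 1 \<Longrightarrow> c M 1 - z \<in> G 2 \<Longrightarrow>
    good (C (M * KK L r)) (fst (mdl (\<lambda>l. - c (L l) 1) r z)) \<and>
    good (C (- (M * KK L r))) (snd (mdl (\<lambda>l. - c (L l) 1) r z))"
proof (induction r arbitrary: M z)
  case 0
  have g: "c M 1 \<in> G 1" by (rule G_c1[OF 0(2)])
  show ?case using 0 g C_line[OF 0(2)] C_negline[OF 0(2)]
    by (simp add: KK_def good_lin good_Iz)
next
  case (Suc r)
  let ?x = "\<lambda>l. - c (L l) 1"
  let ?D = "dual (L (Suc r))"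
  have LS: "L (Suc r) \<in> P" using LP Suc.prems(1) by auto
  have DP: "?D \<in> P" by (rule lbc(3)[OF LS])
  have MDP: "M * ?D \<in> P" by (rule lbc(2)[OF Suc.prems(2) DP])
  have z2': "z + - c (L (Suc r)) 1 \<in> G 1"
    by (rule gamma_filt.add[OF Suc.prems(3) G_neg[OF G_c1[OF LS]]])
  then have z2: "z + ?x (Suc r) \<in> G 1" by simp
  have d2: "c (M * ?D) 1 - (z + ?x (Suc r)) \<in> G 2"
  proof -
    have E: "c (M * ?D) 1 - (z + ?x (Suc r)) =
      (c (M * ?D) 1 - c M 1 - c ?D 1) + (c M 1 - z) + (c (L (Suc r)) 1 + c ?D 1)"
      by (simp add: algebra_simps)
    have A: "(c (M * ?D) 1 - c M 1 - c ?D 1) \<in> G 2" by (rule fgl_lin[OF Suc.prems(2) DP])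
    have B: "c (L (Suc r)) 1 + c ?D 1 \<in> G 2" by (rule dual_lin[OF LS])
    show ?thesis unfolding E by (rule gamma_filt.add[OF gamma_filt.add[OF A Suc.prems(4)] B])
  qed
  have IH1: "good (C (M * KK L r)) (fst (mdl ?x r z)) \<and> good (C (- (M * KK L r))) (snd (mdl ?x r z))"
    using Suc by auto
  have IH2: "good (C ((M * ?D) * KK L r)) (fst (mdl ?x r (z + ?x (Suc r)))) \<and>
      good (C (- ((M * ?D) * KK L r))) (snd (mdl ?x r (z + ?x (Suc r))))"
    using Suc.IH[OF _ MDP z2 d2] Suc.prems(1) by auto
  have K: "KK L (Suc r) = KK L r * (1 - ?D)" by (simp add: KK_def mult.commute)
  have e1: "M * KK L (Suc r) = M * KK L r + - ((M * ?D) * KK L r)"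
    unfolding K by (simp add: algebra_simps)
  have e2: "- (M * KK L (Suc r)) = - (M * KK L r) + (M * ?D) * KK L r"
    unfolding K by (simp add: algebra_simps)
  have g1: "good (C (M * KK L r) * C (- ((M * ?D) * KK L r)))
      (fst (mdl ?x r z) * snd (mdl ?x r (z + ?x (Suc r))))"
    using IH1 IH2 by (intro good_mult) auto
  have g2: "good (C (- (M * KK L r)) * C ((M * ?D) * KK L r))
      (snd (mdl ?x r z) * fst (mdl ?x r (z + ?x (Suc r))))"
    using IH1 IH2 by (intro good_mult) auto
  have h1: "C (M * KK L (Suc r)) = C (M * KK L r) * C (- ((M * ?D) * KK L r))"
    unfolding e1 by (rule C_add)
  have h2: "C (- (M * KK L (Suc r))) = C (- (M * KK L r)) * C ((M * ?D) * KK L r)"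
    unfolding e2 by (rule C_add)
  show ?case
    unfolding h1 h2 mdl.simps(2) fst_conv snd_conv
    using g1 g2 by (rule conjI)
qed

end


theorem lemma6p2:
  fixes phi :: "'r::comm_ring_1 \<Rightarrow> 'h::comm_ring_1"
    and a :: "nat \<Rightarrow> nat \<Rightarrow> 'r"
    and P :: "'k::comm_ring_1 set"
    and dual :: "'k \<Rightarrow> 'k"
    and c :: "'k \<Rightarrow> nat \<Rightarrow> 'h"
    and L :: "nat \<Rightarrow> 'k"
    and r :: nat
  assumes "oriented_data phi a P dual c"
    and "r \<ge> 1"
    and "\<forall>l\<in>{1..r}. L l \<in> P"
  shows "c (\<Prod>l=1..r. (1 - dual (L l))) r
           - (-1) ^ (r - 1) * of_nat (fact (r - 1)) * (\<Prod>l=1..r. c (L l) 1)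
         \<in> gamma_filt phi P c (r + 1)"
proof -
  interpret od_ctx phi a P dual c by (rule od_ctx.intro[OF assms(1)])
  let ?x = "\<lambda>l. - c (L l) 1"
  have LP: "\<forall>l. 1 \<le> l \<and> l \<le> r \<longrightarrow> L l \<in> P" using assms(3) by auto
  have z: "c 1 1 - 0 \<in> gamma_filt phi P c 2" using cc(3)[of 1] by (simp add: gamma_filt.zero)
  have g: "good (C (1 * KK L r)) (fst (mdl ?x r 0))"
    using main_claim[OF LP le_refl lbc(1) gamma_filt.zero z] by simp
  then have m: "c (KK L r) r - fst (mdl ?x r 0) $ r \<in> gamma_filt phi P c (Suc r)"
    by (simp add: good_def C_def)
  have co: "fst (mdl ?x r 0) $ r = - (of_nat (fact (r - 1)) * (\<Prod>l=1..r. ?x l))"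
    using mdl_coeffs[OF assms(2), of ?x] by blast
  have pr: "(\<Prod>l=1..r. ?x l) = (\<Prod>l=1..r. (-1) * c (L l) 1)" by simp
  also have "\<dots> = (\<Prod>l=1..r. (-1::'h)) * (\<Prod>l=1..r. c (L l) 1)" by (rule prod.distrib)
  also have "\<dots> = (-1) ^ r * (\<Prod>l=1..r. c (L l) 1)" by simp
  finally have pr: "(\<Prod>l=1..r. ?x l) = (-1) ^ r * (\<Prod>l=1..r. c (L l) 1)" .
  obtain k where k: "r = Suc k" using assms(2) by (cases r) auto
  have eq: "fst (mdl ?x r 0) $ r = (-1) ^ (r - 1) * of_nat (fact (r - 1)) * (\<Prod>l=1..r. c (L l) 1)"
    unfolding co pr by (simp add: k)
  show ?thesis using m unfolding eq KK_def by simp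
qed

end
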